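(* Let $\Delta$ be a constant, $\delta \in (0,1)$ and $N \geq 1$. Fix a tree $\mathbb{T}$ rooted at $v$ with maximum degree $\Delta$, and let $S = \mathrm{boundary}_{\mathbb{T}, \delta}(v, N)$. Then $|S| \leq T(N) = \widetilde{O}\big(N^{1 - \log \frac{1}{1-\delta}/ \log \frac{\Delta}{1-\delta}}\big)$ and $\mathsf{depth}_{\mathbb{T}}(S) \leq O\big(\log_{\frac{\Delta-1}{1-\delta}}(N)\big)$, where $T(N)$ is the maximum of $|\mathrm{boundary}_{\mathbb{T}', \delta}(v', N)|$ over all trees $\mathbb{T}'$ of maximum degree $\Delta$ and roots $v'$.
   Context: For a rooted tree $\mathbb T$ and $\delta\in(0,1)$, the procedure $\mathrm{boundary}_{\mathbb T,\delta}(u,N)$ is defined recursively: let $C$ be the set of children of $u$ and $d=|C|$; if $N\le1$ return $\{u\}$; else if $C=\emptyset$ return $\emptyset$; else return $\bigcup_{w\in C}\mathrm{boundary}_{\mathbb T_w,\delta}(w,N\cdot\frac{1-\delta}{d})$, where $\mathbb T_w$ is the subtree rooted at $w$. For $S$ a set of vertices, $\mathsf{depth}_{\mathbb T}(S)=\max_{u\in S}\mathrm{dist}_{\mathbb T}(v,u)$ with $v$ the root. $\widetilde O$ and $O$ hide polylogarithmic factors and constants depending on $\Delta,\delta$. *)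

theory Defs
  imports Complex_Main
begin

text \<open>A vertex is identified with the path of child
  indices leading to it from the root; the root is the empty path, and the
  distance of a vertex from the root is the length of its path.\<close>

datatype rtree = Node "rtree list"

text \<open>The procedure boundary(u, N). Vertices of the returned set are paths from u.\<close>

function boundary :: "real \<Rightarrow> rtree \<Rightarrow> real \<Rightarrow> nat list set" where
  "boundary \<delta> (Node cs) N =
     (if N \<le> 1 then {[]}
      else if cs = [] then {}
      else (\<Union>(i, c) \<in> set (zip [0..<length cs] cs).
              (Cons i) ` boundary \<delta> c (N * (1 - \<delta>) / real (length cs))))"
  by pat_completeness auto
termination
  by (relation "measure (\<lambda>(_, t, _). size t)")
     (auto dest!: set_zip_rightD intro: le_imp_less_Suc size_list_estimation')

definition tdepth :: "nat list set \<Rightarrow> nat" where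
  "tdepth S = Max (insert 0 (length ` S))"

text \<open>Degree bounds: a non-root vertex has degree (#children + 1), the root has
  degree #children.\<close>

fun deg_below :: "nat \<Rightarrow> rtree \<Rightarrow> bool" where
  "deg_below \<Delta> (Node cs) = (length cs + 1 \<le> \<Delta> \<and> (\<forall>c \<in> set cs. deg_below \<Delta> c))"

fun max_deg_le :: "nat \<Rightarrow> rtree \<Rightarrow> bool" where
  "max_deg_le \<Delta> (Node cs) = (length cs \<le> \<Delta> \<and> (\<forall>c \<in> set cs. deg_below \<Delta> c))"

definition Tmax :: "nat \<Rightarrow> real \<Rightarrow> real \<Rightarrow> real" where
  "Tmax \<Delta> \<delta> N = Sup {real (card (boundary \<delta> t N)) | t. max_deg_le \<Delta> t}"

end

theory Submission
  imports Defs
begin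
declare boundary.simps[simp del]

fun alldeg :: "nat \<Rightarrow> rtree \<Rightarrow> bool" where
  "alldeg D (Node cs) = (length cs \<le> D \<and> (\<forall>c \<in> set cs. alldeg D c))"

lemma deg_below_alldeg: "deg_below D t \<Longrightarrow> alldeg D t"
  by (induction t rule: deg_below.induct) auto

lemma max_deg_alldeg: "max_deg_le D t \<Longrightarrow> alldeg D t"
  by (cases t) (auto intro: deg_below_alldeg)

lemma bfin: "finite (boundary d t N)"
  apply (induction d t N rule: boundary.induct)
  apply (subst boundary.simps)
  apply auto
  done

lemma bunf: "N > 1 \<Longrightarrow> cs \<noteq> [] \<Longrightarrow> boundary d (Node cs) N =
   (\<Union>(i, c) \<in> set (zip [0..<length cs] cs). (Cons i) ` boundary d c (N * (1 - d) / real (length cs)))"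
  by (subst boundary.simps) auto

lemma bdepth: "s \<in> boundary d t N \<Longrightarrow> s \<noteq> [] \<Longrightarrow> 0 < 1 - d \<Longrightarrow> N * (1 - d) ^ (length s - 1) > 1"
proof (induction d t N arbitrary: s rule: boundary.induct)
  case (1 d cs N)
  from "1.prems" have N1: "N > 1" and ne: "cs \<noteq> []"
    by (auto simp: boundary.simps split: if_splits)
  from "1.prems" N1 ne obtain i c s' where ic: "(i, c) \<in> set (zip [0..<length cs] cs)"
    and s: "s = i # s'" and s': "s' \<in> boundary d c (N * (1 - d) / real (length cs))"
    by (auto simp: bunf)
  show ?case
  proof (cases "s' = []")
    case True then show ?thesis using s N1 by simp
  next
    case False
    have IH: "N * (1 - d) / real (length cs) * (1 - d) ^ (length s' - 1) > 1"
      using "1.IH"[OF _ _ ic refl s' False "1.prems"(3)] N1 ne by auto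
    have L: "real (length cs) \<ge> 1" using ne by (cases cs) auto
    have p: "N * (1 - d) * (1 - d) ^ (length s' - 1) \<ge> 0" using N1 "1.prems"(3) by simp
    have "N * (1 - d) / real (length cs) * (1 - d) ^ (length s' - 1)
          = (N * (1 - d) * (1 - d) ^ (length s' - 1)) / real (length cs)" by simp
    also have "\<dots> \<le> N * (1 - d) * (1 - d) ^ (length s' - 1)"
      using p L by (simp add: divide_le_eq mult_le_cancel_left1 mult_le_cancel_left)
    also have "\<dots> = N * (1 - d) ^ (length s - 1)"
      using s False by (cases s') auto
    finally show ?thesis using IH by simp
  qed
qed

lemma key1:
  fixes D :: nat and q :: real
  assumes D: "D \<ge> 1" and q: "0 < q" "q < 1"
  defines "\<alpha> \<equiv> 1 - ln (1 / q) / ln (real D / q)"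
  shows "real D * (q / D) powr \<alpha> = 1"
proof -
  have lD: "ln (real D / q) > 0" using D q by (simp add: ln_div)
  have lD'': "ln (real D) - ln q > 0" using lD D q by (simp add: ln_div)
  have lq: "ln q < 0" using q by simp
  have e: "\<alpha> * ln (real D / q) = ln D"
    using lD'' q D unfolding \<alpha>_def by (simp add: field_simps ln_div)
  have "ln (real D * (q / D) powr \<alpha>) = 0"
  proof -
    have lD': "ln (real D) - ln q > 0" using lD D q by (simp add: ln_div)
    show ?thesis using D q e lD' by (simp add: ln_mult ln_powr ln_div field_simps)
  qed
  moreover have "real D * (q / D) powr \<alpha> > 0" using D q by simp
  ultimately show ?thesis by (metis exp_ln exp_zero)
qed

lemma key2:
  fixes D m :: nat and q N :: real
  assumes D: "D \<ge> 1" and q: "0 < q" "q < 1" and m: "1 \<le> m" "m \<le> D" and N: "N > 0"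
  defines "\<alpha> \<equiv> 1 - ln (1 / q) / ln (real D / q)"
  shows "real m * (N * q / m) powr \<alpha> \<le> N powr \<alpha>"
proof -
  have lD: "ln (real D / q) > 0" using D q by (simp add: ln_div)
  have lD'': "ln (real D) - ln q > 0" using lD D q by (simp add: ln_div)
  have lq: "ln q < 0" using q by simp
  define a where "a = ln (1 / q) / ln (real D / q)"
  have a0: "a \<ge> 0" using lD'' lq q D unfolding a_def by (simp add: ln_div divide_nonpos_pos)
  have al: "\<alpha> = 1 - a" unfolding a_def \<alpha>_def by simp
  have m0: "real m > 0" using m by simp
  have "real m * (N * q / m) powr \<alpha> = N powr \<alpha> * (q powr \<alpha> * real m powr a)"
    using m0 N q by (simp add: powr_mult powr_divide al powr_diff)
  also have "\<dots> \<le> N powr \<alpha> * (q powr \<alpha> * real D powr a)"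
    using m a0 by (intro mult_left_mono powr_mono2) auto
  also have "q powr \<alpha> * real D powr a = 1"
  proof -
    have "ln (q powr \<alpha> * real D powr a) = 0"
      using q D lD by (simp add: ln_mult ln_powr al a_def ln_div field_simps)
    then show ?thesis using q D by (metis exp_ln exp_zero mult_pos_pos of_nat_0_less_iff powr_gt_zero
       less_le_trans zero_less_one of_nat_1 of_nat_mono powr_eq_0_iff)
  qed
  finally show ?thesis by simp
qed

lemma alpha_nonneg:
  fixes D :: nat
  assumes "D \<ge> 1" "0 < q" "q < 1"
  shows "0 \<le> 1 - ln (1 / q) / ln (real D / q)"
proof -
  have lD'': "ln (real D) - ln q > 0" using assms by (simp add: ln_div)
  have lD: "ln (real D / q) > 0" using assms by (simp add: ln_div)
  have "ln (1 / q) \<le> ln (real D / q)" using assms by (simp add: ln_div)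
  then have "ln (1 / q) / ln (real D / q) \<le> 1" using lD by (simp only: divide_le_eq_1_pos)
  then show ?thesis by simp
qed

lemma bsize:
  fixes D :: nat
  assumes "alldeg D t" "D \<ge> 1" "0 < 1 - d" "1 - d < 1" "N \<ge> (1 - d) / D"
  shows "real (card (boundary d t N)) \<le> real D * N powr (1 - ln (1 / (1 - d)) / ln (real D / (1 - d)))"
  using assms
proof (induction d t N rule: boundary.induct)
  case (1 d cs N)
  define q where "q = 1 - d"
  define \<alpha> where "\<alpha> = 1 - ln (1 / q) / ln (real D / q)"
  have q: "0 < q" "q < 1" using "1.prems" q_def by auto
  have D1: "D \<ge> 1" using "1.prems" by simp
  have a0: "\<alpha> \<ge> 0" unfolding \<alpha>_def using alpha_nonneg[OF D1 q] .
  have Npos: "N > 0" using "1.prems"(5) q q_def "1.prems"(2)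
    by (smt (verit) divide_pos_pos of_nat_0_less_iff of_nat_1 of_nat_mono zero_less_one)
  show ?case
  proof (cases "N \<le> 1")
    case True
    have "real D * N powr \<alpha> \<ge> real D * (q / D) powr \<alpha>"
      using "1.prems" q_def Npos q a0 by (intro mult_left_mono powr_mono2) (auto simp: divide_nonneg_pos)
    moreover have "real D * (q / D) powr \<alpha> = 1" unfolding \<alpha>_def using key1[OF D1 q] .
    moreover have "boundary d (Node cs) N = {[]}" using True by (simp add: boundary.simps)
    ultimately show ?thesis by (simp add: \<alpha>_def q_def)
  next
    case False
    show ?thesis
    proof (cases "cs = []")
      case True
      then show ?thesis using False by (simp add: boundary.simps)
    next
      case ne: False
      define m where "m = length cs"
      define N' where "N' = N * (1 - d) / real m"
      define Z where "Z = set (zip [0..<length cs] cs)"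
      have m: "1 \<le> m" "m \<le> D" using ne "1.prems"(1) m_def by (cases cs; auto)+
      have N': "N' \<ge> q / D" unfolding N'_def q_def using False m q q_def
        by (smt (verit, best) frac_le le_divide_eq_1_pos mult_le_cancel_right1 of_nat_0_less_iff of_nat_1 of_nat_mono times_divide_eq_right)
      have each: "real (card (((#) i) ` boundary d c N')) \<le> real D * N' powr \<alpha>" if ic: "(i, c) \<in> Z" for i c
      proof -
        have "c \<in> set cs" using ic unfolding Z_def by (blast dest: set_zip_rightD)
        then have "alldeg D c" using "1.prems"(1) by simp
        then have "real (card (boundary d c N')) \<le> real D * N' powr \<alpha>"
          using "1.IH"[OF False ne ic[unfolded Z_def] refl] "1.prems" N' q_def
          unfolding N'_def m_def \<alpha>_def by auto
        moreover have "card (((#) i) ` boundary d c N') \<le> card (boundary d c N')"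
          by (rule card_image_le[OF bfin])
        ultimately show ?thesis by linarith
      qed
      have "card (boundary d (Node cs) N) = card (\<Union>x\<in>Z. (case x of (i, c) \<Rightarrow> ((#) i) ` boundary d c N'))"
        using False ne by (simp add: bunf Z_def N'_def m_def)
      also have "\<dots> \<le> (\<Sum>x\<in>Z. card (case x of (i, c) \<Rightarrow> ((#) i) ` boundary d c N'))"
        by (rule card_UN_le) (simp add: Z_def)
      finally have "card (boundary d (Node cs) N) \<le> (\<Sum>x\<in>Z. card (case x of (i, c) \<Rightarrow> ((#) i) ` boundary d c N'))" .
      then have "real (card (boundary d (Node cs) N)) \<le> real (\<Sum>x\<in>Z. card (case x of (i, c) \<Rightarrow> ((#) i) ` boundary d c N'))"
        by (simp only: of_nat_le_iff)
      also have "\<dots> = (\<Sum>x\<in>Z. real (card (case x of (i, c) \<Rightarrow> ((#) i) ` boundary d c N')))"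
        by (rule of_nat_sum)
      also have "\<dots> \<le> (\<Sum>x\<in>Z. real D * N' powr \<alpha>)"
        by (rule sum_mono) (use each in auto)
      also have "\<dots> = real (card Z) * (real D * N' powr \<alpha>)" by simp
      also have "\<dots> \<le> real m * (real D * N' powr \<alpha>)"
      proof (rule mult_right_mono)
        have "card Z \<le> length (zip [0..<length cs] cs)" unfolding Z_def by (rule card_length)
        then show "real (card Z) \<le> real m" by (simp add: m_def)
      qed simp
      also have "\<dots> = real D * (real m * (N * q / m) powr \<alpha>)" by (simp add: N'_def q_def)
      also have "\<dots> \<le> real D * N powr \<alpha>"
        using key2[OF D1 q m Npos] unfolding \<alpha>_def by (intro mult_left_mono) auto
      finally show ?thesis by (simp add: \<alpha>_def q_def)
    qed
  qed
qed
lemma depth_len: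
  assumes "s \<in> boundary d t N" "0 < 1 - d" "1 - d < 1" "N \<ge> 1"
  shows "real (length s) \<le> 1 + ln N / ln (1 / (1 - d))"
proof (cases "s = []")
  case True
  have "ln N / ln (1 / (1 - d)) \<ge> 0" using assms by (intro divide_nonneg_pos) auto
  then show ?thesis using True by simp
next
  case False
  define q where "q = 1 - d"
  define L where "L = length s - 1"
  have q: "0 < q" "q < 1" using assms q_def by auto
  have h: "N * q ^ L > 1" using bdepth[OF assms(1) False assms(2)] unfolding q_def L_def .
  have "ln (N * q ^ L) > 0" using h by simp
  then have "ln N + real L * ln q > 0" using q assms(4) by (simp add: ln_mult ln_realpow)
  then have "real L * ln (1 / q) < ln N" using q by (simp add: ln_div)
  then have "real L < ln N / ln (1 / q)" using q by (simp add: pos_less_divide_eq)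
  moreover have "real (length s) = 1 + real L" using False L_def by (cases s) auto
  ultimately show ?thesis unfolding q_def by simp
qed

theorem proposition3p6:
  fixes \<Delta> :: nat and \<delta> :: real
  assumes "\<Delta> \<ge> 2" and "0 < \<delta>" and "\<delta> < 1"
  shows "\<exists>C > 0. \<exists>k :: nat. \<exists>D > 0. \<forall>N :: real. \<forall>t. N \<ge> 1 \<longrightarrow> max_deg_le \<Delta> t \<longrightarrow>
     real (card (boundary \<delta> t N)) \<le> Tmax \<Delta> \<delta> N
   \<and> Tmax \<Delta> \<delta> N \<le> C * N powr (1 - ln (1 / (1 - \<delta>)) / ln (real \<Delta> / (1 - \<delta>))) * (1 + ln N) ^ k
   \<and> real (tdepth (boundary \<delta> t N)) \<le> D * (1 + log ((real \<Delta> - 1) / (1 - \<delta>)) N)"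
proof -
  define q where "q = 1 - \<delta>"
  define \<alpha> where "\<alpha> = 1 - ln (1 / q) / ln (real \<Delta> / q)"
  define b where "b = (real \<Delta> - 1) / q"
  define Dd where "Dd = ln b / ln (1 / q)"
  have q: "0 < q" "q < 1" using assms q_def by auto
  have D1: "\<Delta> \<ge> 1" using assms by simp
  have b1: "b \<ge> 1 / q" unfolding b_def using assms q by (simp add: divide_right_mono)
  have lq: "ln (1 / q) > 0" using q by simp
  have lb: "ln b \<ge> ln (1 / q)" using b1 q by (intro ln_mono) auto
  have Dd1: "Dd \<ge> 1" unfolding Dd_def using lb lq by simp
  have main: "real (card (boundary \<delta> t N)) \<le> real \<Delta> * N powr \<alpha>" if "N \<ge> 1" "max_deg_le \<Delta> t" for N t
  proof -
    have "q / real \<Delta> \<le> 1" using q D1 by (simp add: divide_le_eq_1)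
    then show ?thesis using bsize[OF max_deg_alldeg[OF that(2)] D1, of \<delta> N] q that(1)
      unfolding \<alpha>_def q_def by simp
  qed
  have P: "\<forall>N :: real. \<forall>t. N \<ge> 1 \<longrightarrow> max_deg_le \<Delta> t \<longrightarrow>
     real (card (boundary \<delta> t N)) \<le> Tmax \<Delta> \<delta> N
   \<and> Tmax \<Delta> \<delta> N \<le> real \<Delta> * N powr (1 - ln (1 / (1 - \<delta>)) / ln (real \<Delta> / (1 - \<delta>))) * (1 + ln N) ^ 0
   \<and> real (tdepth (boundary \<delta> t N)) \<le> Dd * (1 + log ((real \<Delta> - 1) / (1 - \<delta>)) N)"
  proof (intro allI impI conjI)
    fix N :: real and t assume N: "N \<ge> 1" and t: "max_deg_le \<Delta> t"
    define X where "X = {real (card (boundary \<delta> t N)) | t. max_deg_le \<Delta> t}"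
    have TX: "Tmax \<Delta> \<delta> N = Sup X" unfolding Tmax_def X_def ..
    have ub: "x \<le> real \<Delta> * N powr \<alpha>" if "x \<in> X" for x using that main[OF N] unfolding X_def by auto
    have ne: "X \<noteq> {}" unfolding X_def using t by auto
    have bdd: "bdd_above X" unfolding bdd_above_def using ub by blast
    show "real (card (boundary \<delta> t N)) \<le> Tmax \<Delta> \<delta> N"
      unfolding TX by (rule cSup_upper[OF _ bdd]) (use t X_def in auto)
    show "Tmax \<Delta> \<delta> N \<le> real \<Delta> * N powr (1 - ln (1 / (1 - \<delta>)) / ln (real \<Delta> / (1 - \<delta>))) * (1 + ln N) ^ 0"
      unfolding TX using cSup_least[OF ne ub] by (simp add: \<alpha>_def q_def)
    have bnd: "real (length s) \<le> Dd * (1 + log b N)" if "s \<in> boundary \<delta> t N" for s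
    proof -
      have "real (length s) \<le> 1 + ln N / ln (1 / q)"
        using depth_len[OF that _ _ N] q unfolding q_def by simp
      also have "ln N / ln (1 / q) = Dd * log b N"
        unfolding Dd_def log_def using lq lb by (simp add: field_simps)
      also have "1 + Dd * log b N \<le> Dd * (1 + log b N)" using Dd1 by (simp add: algebra_simps)
      finally show ?thesis .
    qed
    have lgN: "log b N \<ge> 0" using N lb lq unfolding log_def by (intro divide_nonneg_pos) auto
    have "real (tdepth (boundary \<delta> t N)) \<le> Dd * (1 + log b N)"
    proof -
      have fin: "finite (insert 0 (length ` boundary \<delta> t N))" using bfin by simp
      obtain m where m: "m \<in> insert 0 (length ` boundary \<delta> t N)" "tdepth (boundary \<delta> t N) = m"
        unfolding tdepth_def using Max_in[OF fin] by blast
      show ?thesis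
      proof (cases "m = 0")
        case True then show ?thesis using m Dd1 lgN by simp
      next
        case False then show ?thesis using m bnd by auto
      qed
    qed
    then show "real (tdepth (boundary \<delta> t N)) \<le> Dd * (1 + log ((real \<Delta> - 1) / (1 - \<delta>)) N)"
      unfolding b_def q_def .
  qed
  show ?thesis
    apply (rule exI[of _ "real \<Delta>"], rule conjI)
    using D1 apply simp
    apply (rule exI[of _ 0], rule exI[of _ Dd], rule conjI)
    using Dd1 apply simp
    using P by blast
qed

end
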